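(* Let $L,\pi_L,\theta,a$ be as below (so $a^{-1}$ also satisfies the hypothesis). Then $$M(T,\theta,a)=-\theta(-1)\,\omega^{-1}(-1)\,M(T,\theta,a^{-1}).$$
   Context: Let $p\ge5$ be prime; $\zeta_{p^{n+1}}$ compatible primitive $p^{n+1}$-th roots of unity, $K_n=\mathbb Q_p(\zeta_{p^{n+1}})$, $\Gamma_n=\mathrm{Gal}(K_n/K_0)$, $\gamma_0\in\varprojlim\Gamma_n$ acting by $\zeta\mapsto\zeta^{1+p}$. For $a\in\mathbb Z_p^*$: $\omega(a)$ Teichmüller, $\langle a\rangle=a/\omega(a)$, $\gamma_n(a)\in\Gamma_n$: $\zeta_{p^{n+1}}\mapsto\zeta_{p^{n+1}}^{\langle a\rangle}$. $\widehat\Delta$ is the group of characters $\theta:(\mathbb Z/p)^*\cong\Delta\to\mu_{p-1}$ (powers of $\omega$), $\theta(k)$ for $p\nmid k$. Let $L$ be a finite extension of $\mathbb Q_p$, $O_L$ its integers, $\pi_L$ a uniformizer, $\Lambda_L=O_L[[T]]\cong\varprojlim O_L[\Gamma_n]$ with $T\leftrightarrow\gamma_0-1$. For $\theta\in\widehat\Delta$ and $a\in O_L$ with $a(a-1)\not\equiv0\pmod{\pi_L}$, $M_n(\theta,a)=\sum_{1\le k\le p^{n+1}-1,\,p\nmid k}\frac{a^k}{a^{p^{n+1}}-1}\theta(k)\omega^{-1}(k)\gamma_n(k)\in O_L[\Gamma_n]$; these form a compatible system under restriction, and $M(T,\theta,a)\in\Lambda_L$ denotes the corresponding power series (Mirimanoff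 power series). *)

theory Defs
  imports Complex_Main "HOL-Computational_Algebra.Primes"
begin

text \<open>
  The finite extension L of Q_p is modelled as a field of type 'a (characteristic 0)
  together with a normalized discrete valuation v : L^* -> Z (the value of v at 0 is
  irrelevant), such that L is complete with respect to v, the residue field
  O_L / m_L is finite, and its characteristic is p.  These are exactly (up to
  isomorphism) the finite extensions of Q_p.
\<close>

definition vge :: "('a::field \<Rightarrow> int) \<Rightarrow> 'a \<Rightarrow> int \<Rightarrow> bool" where
  "vge v x N \<longleftrightarrow> x = 0 \<or> v x \<ge> N"

definition int_ring :: "('a::field \<Rightarrow> int) \<Rightarrow> 'a set" where
  "int_ring v = {x. vge v x 0}"

definition padic_field :: "nat \<Rightarrow> ('a::field_char_0 \<Rightarrow> int) \<Rightarrow> bool" where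
  "padic_field p v \<longleftrightarrow>
     (\<forall>x y. x \<noteq> 0 \<longrightarrow> y \<noteq> 0 \<longrightarrow> v (x * y) = v x + v y) \<and>
     (\<forall>x y. x \<noteq> 0 \<longrightarrow> y \<noteq> 0 \<longrightarrow> x + y \<noteq> 0 \<longrightarrow> v (x + y) \<ge> min (v x) (v y)) \<and>
     (\<exists>\<pi>. \<pi> \<noteq> 0 \<and> v \<pi> = 1) \<and>
     vge v (of_nat p) 1 \<and>
     (\<exists>S. finite S \<and> S \<subseteq> int_ring v \<and> (\<forall>x\<in>int_ring v. \<exists>s\<in>S. vge v (x - s) 1)) \<and>
     (\<forall>f :: nat \<Rightarrow> 'a.
        (\<forall>N. \<exists>M. \<forall>m\<ge>M. \<forall>n\<ge>M. vge v (f m - f n) N) \<longrightarrow>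
        (\<exists>l. \<forall>N. \<exists>M. \<forall>n\<ge>M. vge v (f n - l) N))"

definition teich :: "nat \<Rightarrow> ('a::field_char_0 \<Rightarrow> int) \<Rightarrow> int \<Rightarrow> 'a" where
  "teich p v k = (THE x. vge v x 0 \<and> x ^ (p - 1) = 1 \<and> vge v (x - of_int k) 1)"

text \<open>Gamma_n = Gal(K_n/K_0) is identified with {u mod p^(n+1) : u = 1 mod p} via
  (zeta_{p^(n+1)} -> zeta_{p^(n+1)}^u).  gamma_idx p v n k is the representative
  u in [0, p^(n+1)) of <k> = k/omega(k) in Z_p modulo p^(n+1), i.e. the element
  gamma_n(k); it is characterised by p^(n+1) dividing u*omega(k) - k in O_L.\<close>
definition gamma_idx :: "nat \<Rightarrow> ('a::field_char_0 \<Rightarrow> int) \<Rightarrow> nat \<Rightarrow> int \<Rightarrow> nat" where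
  "gamma_idx p v n k = (THE u. u < p ^ (n + 1) \<and>
      vge v (of_nat u * teich p v k - of_int k) (v (of_nat p ^ (n + 1))))"

text \<open>Elements of O_L[Gamma_n] are represented as coefficient functions
  u -> coefficient of the group element u.  The character theta = omega^j.
  mirimanoff p v j a n is M_n(theta,a); the family over n is the element
  M(T,theta,a) of Lambda_L = lim O_L[Gamma_n].\<close>
definition mirimanoff :: "nat \<Rightarrow> ('a::field_char_0 \<Rightarrow> int) \<Rightarrow> nat \<Rightarrow> 'a \<Rightarrow> nat \<Rightarrow> nat \<Rightarrow> 'a" where
  "mirimanoff p v j a n u =
     (\<Sum>k \<in> {k::nat. 1 \<le> k \<and> k \<le> p ^ (n + 1) - 1 \<and> \<not> p dvd k \<and> gamma_idx p v n (int k) = u}.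
        a ^ k / (a ^ (p ^ (n + 1)) - 1) * teich p v (int k) ^ j * inverse (teich p v (int k)))"

end

theory Submission
  imports Defs "HOL-Number_Theory.Number_Theory"
begin

locale padic =
  fixes p :: nat and v :: "'a::field_char_0 \<Rightarrow> int"
  assumes pf: "padic_field p v" and pr: "prime p" and p5: "p \<ge> 5"
begin

lemma vmult: "x \<noteq> 0 \<Longrightarrow> y \<noteq> 0 \<Longrightarrow> v (x*y) = v x + v y"
  using pf unfolding padic_field_def by blast
lemma vadd: "x \<noteq> 0 \<Longrightarrow> y \<noteq> 0 \<Longrightarrow> x + y \<noteq> 0 \<Longrightarrow> v (x+y) \<ge> min (v x) (v y)"
  using pf unfolding padic_field_def by blast
lemma vp: "vge v (of_nat p) 1" using pf unfolding padic_field_def by blast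
lemma complete: "(\<forall>N. \<exists>M. \<forall>m\<ge>M. \<forall>n\<ge>M. vge v ((f::nat \<Rightarrow> 'a) m - f n) N) \<Longrightarrow> (\<exists>l. \<forall>N. \<exists>M. \<forall>n\<ge>M. vge v (f n - l) N)"
  using pf unfolding padic_field_def by blast

lemma v1: "v 1 = 0" using vmult[of 1 1] by simp
lemma vm1: "v (-1) = 0" using vmult[of "-1" "-1"] v1 by simp
lemma vneg: "v (-x) = v x"
proof (cases "x = 0")
  case True thus ?thesis by simp
next
  case False
  then have "v (-1 * x) = v (-1) + v x" by (intro vmult) auto
  thus ?thesis using vm1 by simp
qed

lemma vge_0[simp]: "vge v 0 N" by (simp add: vge_def)
lemma vge_neg: "vge v (-x) N = vge v x N" by (simp add: vge_def vneg)
lemma vge_add: "vge v x N \<Longrightarrow> vge v y N \<Longrightarrow> vge v (x+y) N"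
  unfolding vge_def using vadd[of x y] by fastforce
lemma vge_diff: "vge v x N \<Longrightarrow> vge v y N \<Longrightarrow> vge v (x-y) N"
  using vge_add[of x N "-y"] vge_neg by simp
lemma vge_mult: "vge v x N \<Longrightarrow> vge v y M \<Longrightarrow> vge v (x*y) (N+M)"
proof -
  assume a: "vge v x N" "vge v y M"
  show ?thesis
  proof (cases "x = 0 \<or> y = 0")
    case True thus ?thesis by (auto simp: vge_def)
  next
    case False thus ?thesis using a vmult[of x y] by (auto simp: vge_def)
  qed
qed
lemma vge_mono: "vge v x N \<Longrightarrow> M \<le> N \<Longrightarrow> vge v x M" unfolding vge_def by auto
lemma vge_1: "vge v 1 0" by (simp add: vge_def v1)
lemma vge_of_nat: "vge v (of_nat n) 0"
proof (induction n)
  case (Suc n) thus ?case using vge_add[OF vge_1 Suc.IH] by simp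
qed simp
lemma vge_of_int: "vge v (of_int z) 0"
proof (cases z rule: int_cases)
  case (nonneg n) thus ?thesis using vge_of_nat[of n] by simp
next
  case (neg n) thus ?thesis using vge_of_nat[of "Suc n"] vge_neg by (metis of_int_minus of_int_of_nat_eq)
qed
lemma vge_sum: "finite A \<Longrightarrow> (\<And>i. i \<in> A \<Longrightarrow> vge v (f i) N) \<Longrightarrow> vge v (sum f A) N"
  by (induction A rule: finite_induct) (auto intro: vge_add)
lemma vge_pow0: "vge v x 0 \<Longrightarrow> vge v (x^n) 0"
proof (induction n)
  case 0 thus ?case using vge_1 by simp
next
  case (Suc n) thus ?case using vge_mult[of x 0 "x^n" 0] by simp
qed
lemma vge_pow_p: "vge v (of_nat p ^ m) (int m)"
proof (induction m)
  case 0 thus ?case using vge_1 by simp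
next
  case (Suc m) thus ?case using vge_mult[OF vp Suc.IH] by (simp add: add.commute)
qed
lemma vge_dvd: "int p ^ m dvd z \<Longrightarrow> vge v (of_int z) (int m)"
proof -
  assume "int p ^ m dvd z"
  then obtain w where w: "z = int p ^ m * w" by (auto elim: dvdE)
  have "vge v (of_nat p ^ m * of_int w) (int m + 0)"
    by (rule vge_mult[OF vge_pow_p vge_of_int])
  thus ?thesis using w by simp
qed
lemma congv: "[a = b] (mod p^j) \<Longrightarrow> vge v (of_nat a - of_nat b) (int j)"
proof -
  assume "[a = b] (mod p^j)"
  then have "[int a = int b] (mod int p ^ j)" using cong_int_iff by (metis of_nat_power)
  then have "int p ^ j dvd int a - int b" by (simp add: cong_iff_dvd_diff)
  from vge_dvd[OF this] show ?thesis by simp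
qed
lemma vge_all: "(\<And>N. vge v x N) \<Longrightarrow> x = 0"
proof (rule ccontr)
  assume h: "\<And>N. vge v x N" and "x \<noteq> 0"
  then have "v x \<ge> v x + 1" using h[of "v x + 1"] by (simp add: vge_def)
  thus False by simp
qed
lemma v_coprime: "\<not> int p dvd z \<Longrightarrow> of_int z \<noteq> (0::'a) \<and> v (of_int z) = 0"
proof -
  assume nd: "\<not> int p dvd z"
  then have z0: "z \<noteq> 0" by auto
  have "prime (int p)" using pr by simp
  then have "coprime (int p) z" using nd prime_imp_coprime by blast
  then obtain a b where ab: "a * int p + b * z = 1" using bezout_int[of "int p" z] by auto
  have ge0: "v (of_int z) \<ge> 0" using vge_of_int[of z] z0 by (simp add: vge_def)
  have "\<not> v (of_int z) \<ge> 1"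
  proof
    assume "v (of_int z) \<ge> 1"
    then have "vge v (of_int z :: 'a) 1" by (simp add: vge_def)
    then have "vge v (of_int b * of_int z :: 'a) (0+1)" using vge_mult[OF vge_of_int] by blast
    moreover have "vge v (of_int a * of_nat p :: 'a) (0+1)" using vge_mult[OF vge_of_int vp] by blast
    ultimately have "vge v (of_int a * of_nat p + of_int b * of_int z :: 'a) 1" using vge_add by simp
    moreover have "(of_int a * of_nat p + of_int b * of_int z :: 'a) = of_int (a * int p + b * z)" by simp
    ultimately have "vge v (1::'a) 1" using ab by simp
    thus False using v1 by (simp add: vge_def)
  qed
  thus ?thesis using ge0 z0 by simp
qed
lemma vpow: "x \<noteq> 0 \<Longrightarrow> v (x^n) = int n * v x"
proof (induction n)
  case 0 thus ?case using v1 by simp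
next
  case (Suc n) thus ?case using vmult[of x "x^n"] by (simp add: algebra_simps)
qed
lemma vge_pow_diff: "vge v x 0 \<Longrightarrow> vge v y 0 \<Longrightarrow> vge v (x - y) N \<Longrightarrow> vge v (x^n - y^n) N"
proof -
  assume x: "vge v x 0" and y: "vge v y 0" and d: "vge v (x - y) N"
  have "vge v (\<Sum>i<n. y^(n - Suc i) * x^i) 0"
    by (rule vge_sum) (auto intro!: vge_mult[where N=0 and M=0, simplified] vge_pow0 x y)
  from vge_mult[OF d this] show ?thesis by (simp add: power_diff_sumr2)
qed


definition TP :: "int \<Rightarrow> 'a \<Rightarrow> bool" where
  "TP k x \<longleftrightarrow> vge v x 0 \<and> x ^ (p - 1) = 1 \<and> vge v (x - of_int k) 1"

lemma teich_TP: "teich p v k = (THE x. TP k x)"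
  unfolding teich_def TP_def by simp

lemma p1: "p - 1 > 0" using p5 by simp
lemma even_p1: "even (p - 1)"
  using prime_odd_nat[OF pr] p5 by simp

lemma unit_v: "vge v x 0 \<Longrightarrow> x ^ (p - 1) = 1 \<Longrightarrow> x \<noteq> 0 \<and> v x = 0"
proof -
  assume x: "vge v x 0" "x ^ (p - 1) = 1"
  then have x0: "x \<noteq> 0" using p1 by (metis power_0_left zero_neq_one neq0_conv)
  have "v (x ^ (p-1)) = int (p-1) * v x" using vpow[OF x0] .
  then have "int (p-1) * v x = 0" using x v1 by simp
  thus ?thesis using p1 x0 by simp
qed

lemma TP_uniq: "TP k x \<Longrightarrow> TP k y \<Longrightarrow> x = y"
proof (rule ccontr)
  assume tx: "TP k x" and ty: "TP k y" and ne: "x \<noteq> y"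
  have d: "vge v (x - y) 1"
    using vge_diff[of "x - of_int k" 1 "y - of_int k"] tx ty by (simp add: TP_def)
  have ux: "x \<noteq> 0 \<and> v x = 0" using tx unit_v by (simp add: TP_def)
  have uy: "y \<noteq> 0 \<and> v y = 0" using ty unit_v by (simp add: TP_def)
  define z where "z = x / y"
  have xz: "x = z * y" using uy by (simp add: z_def)
  have z0: "z \<noteq> 0" using ux xz by auto
  have vz: "v z = 0" using vmult[OF z0, of y] uy ux xz by simp
  have zp: "z ^ (p-1) = 1" using tx ty by (simp add: TP_def z_def power_divide)
  have z1: "z \<noteq> 1" using ne xz by simp
  have "x - y = (z - 1) * y" using xz by (simp add: algebra_simps)
  then have "v (x - y) = v (z - 1) + v y" using vmult[of "z-1" y] z1 uy by simp
  then have vz1: "vge v (z - 1) 1" using d ne uy z1 by (simp add: vge_def)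
  have "z ^ (p-1) - 1 ^ (p-1) = (z - 1) * (\<Sum>i<p-1. 1 ^ (p - 1 - Suc i) * z ^ i)"
    by (rule power_diff_sumr2)
  then have "(z - 1) * (\<Sum>i<p-1. z ^ i) = 0" using zp by simp
  then have s0: "(\<Sum>i<p-1. z ^ i) = 0" using z1 by simp
  have "vge v (\<Sum>i<p-1. z ^ i - 1 ^ i) 1"
  proof -
    have zO: "vge v z 0" using vz by (simp add: vge_def)
    have aux: "vge v (z^i - 1^i) 1" for i using vge_pow_diff[OF zO vge_1 vz1] .
    show ?thesis by (rule vge_sum) (use aux in auto)
  qed
  moreover have "(\<Sum>i<p-1. z ^ i - 1 ^ i) = (\<Sum>i<p-1. z ^ i) - of_nat (p - 1)"
    by (simp add: sum_subtractf)
  ultimately have "vge v (of_int (int (p - 1)) :: 'a) 1" using s0 vge_neg by simp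
  moreover have "\<not> int p dvd int (p - 1)"
  proof
    assume "int p dvd int (p - 1)"
    then have "p dvd p - 1" by simp
    then have "p \<le> p - 1" using p1 by (simp add: dvd_imp_le)
    thus False using p5 by simp
  qed
  ultimately show False
  proof -
    assume A: "vge v (of_int (int (p - 1)) :: 'a) 1" and nd: "\<not> int p dvd int (p - 1)"
    have B: "of_int (int (p-1)) \<noteq> (0::'a) \<and> v (of_int (int (p-1)) :: 'a) = 0"
      using v_coprime[OF nd] by blast
    from A B have "v (of_int (int (p-1)) :: 'a) \<ge> 1" unfolding vge_def by blast
    with B show False by linarith
  qed
qed

lemma IL: "\<not> p dvd k \<Longrightarrow> (p - 1) dvd d \<Longrightarrow> [k ^ (p ^ m * d) = 1] (mod p ^ (m + 1))"
proof -
  assume nd: "\<not> p dvd k" and dd: "(p - 1) dvd d"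
  then obtain e where e: "d = (p - 1) * e" by (auto elim: dvdE)
  have "coprime p k" using nd pr prime_imp_coprime by blast
  then have "coprime k (p ^ (m+1))" by (simp add: ac_simps)
  then have "[k ^ totient (p ^ (m+1)) = 1] (mod p ^ (m+1))" by (rule euler_theorem)
  then have c: "[k ^ (p ^ m * (p - 1)) = 1] (mod p ^ (m+1))"
    using totient_prime_power_Suc[OF pr, of m] by simp
  have "[(k ^ (p ^ m * (p - 1))) ^ e = 1 ^ e] (mod p ^ (m+1))" by (rule cong_pow[OF c])
  thus ?thesis using e by (simp add: power_mult mult.assoc)
qed

lemma dvd_pm1: "(p - 1) dvd (p ^ j - 1)"
proof -
  have "int p ^ j - 1 ^ j = (int p - 1) * (\<Sum>i<j. 1 ^ (j - Suc i) * int p ^ i)"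
    by (rule power_diff_sumr2)
  then have "(int p - 1) dvd (int p ^ j - 1)" by simp
  moreover have "int p ^ j \<ge> 1" "int p \<ge> 1" using p5 by auto
  ultimately have "int (p - 1) dvd int (p ^ j - 1)" by (simp add: of_nat_diff)
  thus ?thesis by (simp only: of_nat_dvd_iff)
qed

lemma pow_cong: "\<not> p dvd k \<Longrightarrow> m \<le> n \<Longrightarrow> [k ^ (p ^ n) = k ^ (p ^ m)] (mod p ^ (m + 1))"
proof -
  assume nd: "\<not> p dvd k" and mn: "m \<le> n"
  have pj: "p ^ (n - m) \<ge> 1" using p5 by simp
  have "(p - 1) dvd (p ^ (n - m) - 1)" by (rule dvd_pm1)
  from IL[OF nd this, of m] have c: "[k ^ (p ^ m * (p ^ (n - m) - 1)) = 1] (mod p ^ (m + 1))" .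
  have "p ^ n = p ^ m + p ^ m * (p ^ (n - m) - 1)"
  proof -
    have a: "p^m * (p^(n-m) - 1) = p^m*p^(n-m) - p^m" by (simp add: diff_mult_distrib2)
    have b: "p^m*p^(n-m) = p^n" using mn by (simp add: power_add[symmetric])
    have c: "p^m \<le> p^n" using mn p5 by (simp add: power_increasing)
    show ?thesis using a b c by simp
  qed
  then have "k ^ (p ^ n) = k ^ (p ^ m) * k ^ (p ^ m * (p ^ (n - m) - 1))"
    by (simp add: power_add)
  moreover have "[k ^ (p ^ m) * k ^ (p ^ m * (p ^ (n - m) - 1)) = k ^ (p ^ m) * 1] (mod p ^ (m + 1))"
    by (rule cong_mult[OF cong_refl c])
  ultimately show ?thesis by simp
qed

lemma TP_ex: "\<not> p dvd k \<Longrightarrow> \<exists>x. TP (int k) x"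
proof -
  assume nd: "\<not> p dvd k"
  define f where "f n = (of_nat (k ^ (p ^ n)) :: 'a)" for n
  have fc: "vge v (f n - f m) (int m + 1)" if "m \<le> n" for m n
    using congv[OF pow_cong[OF nd that]] by (simp add: f_def add.commute)
  have "\<forall>N. \<exists>M. \<forall>m\<ge>M. \<forall>n\<ge>M. vge v (f m - f n) N"
  proof
    fix N
    show "\<exists>M. \<forall>m\<ge>M. \<forall>n\<ge>M. vge v (f m - f n) N"
    proof (intro exI allI impI)
      fix m n assume h1: "nat N \<le> m" and h2: "nat N \<le> n"
      have "vge v (f m - f (nat N)) (int (nat N) + 1)" "vge v (f n - f (nat N)) (int (nat N) + 1)"
        using fc[OF h1] fc[OF h2] by blast+
      from vge_diff[OF this] have "vge v (f m - f n) (int (nat N) + 1)" by simp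
      thus "vge v (f m - f n) N" by (rule vge_mono) simp
    qed
  qed
  from complete[OF this] obtain l where l: "\<And>N. \<exists>M. \<forall>n\<ge>M. vge v (f n - l) N" by blast
  have fO: "vge v (f n) 0" for n unfolding f_def by (rule vge_of_nat)
  have lO: "vge v l 0"
  proof -
    obtain M where "\<forall>n\<ge>M. vge v (f n - l) 0" using l by blast
    then have "vge v (f M - l) 0" by simp
    then have "vge v (f M - (f M - l)) 0" by (rule vge_diff[OF fO])
    thus ?thesis by simp
  qed
  have "l ^ (p - 1) = 1"
  proof -
    have "vge v (l ^ (p - 1) - 1) N" for N
    proof -
      obtain M where M: "\<forall>n\<ge>M. vge v (f n - l) N" using l by blast
      define n where "n = max M (nat N)"
      have "vge v (f n - l) N" using M n_def by simp
      then have a: "vge v (f n ^ (p - 1) - l ^ (p - 1)) N" by (rule vge_pow_diff[OF fO lO])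
      have "[k ^ (p ^ n * (p - 1)) = 1] (mod p ^ (n + 1))" using IL[OF nd, of "p - 1" n] by simp
      from congv[OF this] have "vge v (f n ^ (p - 1) - 1) (int n + 1)"
        by (simp add: f_def power_mult add.commute)
      then have b: "vge v (f n ^ (p - 1) - 1) N" by (rule vge_mono) (simp add: n_def)
      from vge_diff[OF b a] show ?thesis by simp
    qed
    thus ?thesis using vge_all[of "l ^ (p - 1) - 1"] by simp
  qed
  moreover have "vge v (l - of_int (int k)) 1"
  proof -
    obtain n where n: "vge v (f n - l) 1" using l by blast
    have "[k ^ (p ^ 0 * (p ^ n - 1)) = 1] (mod p ^ (0 + 1))"
      by (rule IL[OF nd dvd_pm1])
    then have "[k ^ (p ^ n - 1) = 1] (mod p)" by simp
    then have "[k * k ^ (p ^ n - 1) = k * 1] (mod p)" by (rule cong_mult[OF cong_refl])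
    moreover have "k * k ^ (p ^ n - 1) = k ^ (p ^ n)"
      using p5 by (simp add: power_Suc[symmetric])
    ultimately have "[k ^ (p ^ n) = k] (mod p ^ 1)" by simp
    from congv[OF this] have "vge v (f n - of_nat k) 1" by (simp add: f_def)
    from vge_diff[OF this n] show ?thesis by simp
  qed
  ultimately show ?thesis using lO unfolding TP_def by blast
qed

lemma teich_spec: "\<not> p dvd k \<Longrightarrow> TP (int k) (teich p v (int k))"
  unfolding teich_TP using TP_ex TP_uniq by (metis theI)

lemma teich_eq: "TP k x \<Longrightarrow> teich p v k = x"
  unfolding teich_TP using TP_uniq by blast

lemma teich_m1: "teich p v (-1) = -1"
  unfolding teich_TP
proof (rule the_equality)
  have m1: "(-1::'a) ^ (p - 1) = 1" by (rule neg_one_even_power[OF even_p1])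
  show "TP (- 1) (- 1)" unfolding TP_def using m1 by (simp add: vge_def vm1)
  then show "TP (- 1) x \<Longrightarrow> x = - 1" for x using TP_uniq by blast
qed

lemma teich_neg:
  assumes nd: "\<not> p dvd k" and kN: "k \<le> p ^ (n+1)"
  shows "teich p v (int (p ^ (n+1) - k)) = - teich p v (int k)"
proof (rule teich_eq)
  let ?t = "teich p v (int k)"
  have t: "TP (int k) ?t" by (rule teich_spec[OF nd])
  have m: "(- ?t) ^ (p - 1) = ?t ^ (p - 1)" by (rule power_minus_even[OF even_p1])
  have N: "vge v (of_nat p ^ (n+1) :: 'a) 1"
    by (rule vge_mono[OF vge_pow_p]) simp
  have e: "- ?t - of_int (int (p ^ (n + 1) - k)) = - (?t - of_int (int k)) - of_nat p ^ (n+1)"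
    using kN by (simp add: of_nat_diff)
  have "vge v (?t - of_int (int k)) 1" using t by (simp add: TP_def)
  then have "vge v (- (?t - of_int (int k))) 1" by (simp only: vge_neg)
  then have "vge v (- (?t - of_int (int k)) - of_nat p ^ (n+1)) 1"
    using vge_diff[OF _ N] by blast
  then show "TP (int (p ^ (n + 1) - k)) (- ?t)"
    using t m unfolding TP_def e by (simp add: vge_neg)
qed

lemma gamma_neg:
  assumes nd: "\<not> p dvd k" and kN: "k \<le> p ^ (n+1)"
  shows "gamma_idx p v n (int (p ^ (n+1) - k)) = gamma_idx p v n (int k)"
proof -
  let ?t = "teich p v (int k)"
  let ?V = "v (of_nat p ^ (n + 1) :: 'a)"
  have N: "vge v (of_nat p ^ (n+1) :: 'a) ?V" by (simp add: vge_def)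
  have "vge v (of_nat u * teich p v (int (p ^ (n + 1) - k)) - of_int (int (p ^ (n + 1) - k))) ?V
      = vge v (of_nat u * ?t - of_int (int k)) ?V" for u :: nat
  proof -
    have e: "of_nat u * teich p v (int (p ^ (n + 1) - k)) - of_int (int (p ^ (n + 1) - k))
        = - (of_nat u * ?t - of_int (int k)) - of_nat p ^ (n+1)"
      unfolding teich_neg[OF nd kN] using kN by (simp add: of_nat_diff algebra_simps)
    have e2: "of_nat u * ?t - of_int (int k) = - ((- (of_nat u * ?t - of_int (int k)) - of_nat p ^ (n+1)) + of_nat p ^ (n+1))"
      by simp
    show ?thesis unfolding e
    proof
      assume "vge v (- (of_nat u * ?t - of_int (int k)) - of_nat p ^ (n+1)) ?V"
      from vge_add[OF this N] show "vge v (of_nat u * ?t - of_int (int k)) ?V"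
        by (subst e2) (simp only: vge_neg)
    next
      assume "vge v (of_nat u * ?t - of_int (int k)) ?V"
      then show "vge v (- (of_nat u * ?t - of_int (int k)) - of_nat p ^ (n+1)) ?V"
        using vge_diff[OF _ N] vge_neg by blast
    qed
  qed
  then show ?thesis unfolding gamma_idx_def by simp
qed
end

lemma sign_aux:
  fixes X t :: "'a::field"
  shows "- X * (- t) ^ j * inverse (- t) = (-1) ^ j * (X * t ^ j * inverse t)"
proof -
  have "(- t) ^ j = (-1) ^ j * t ^ j" by (rule power_minus)
  moreover have "inverse (- t) = - inverse t" by simp
  ultimately show ?thesis by (simp add: algebra_simps)
qed

lemma frac_id:
  fixes a :: "'a::field"
  assumes a0: "a \<noteq> 0" and kN: "k \<le> N"
  shows "a^(N-k)/(a^N - 1) = - (inverse a ^ k / (inverse a ^ N - 1))"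
proof -
  have e: "a^N = a^(N-k) * a^k" using kN by (simp add: power_add[symmetric])
  have b0: "a^(N-k) \<noteq> 0" "a^k \<noteq> 0" using a0 by auto
  show ?thesis
  proof (cases "a^N = 1")
    case True
    then have "inverse a ^ N = 1" by (simp add: power_inverse)
    thus ?thesis using True by simp
  next
    case False
    then have "inverse a ^ N \<noteq> 1" by (simp add: power_inverse)
    then have f2: "inverse (a^(N-k) * a^k) \<noteq> 1" using e by (simp add: power_inverse)
    have f1: "a^(N-k) * a^k \<noteq> 1" using False e by simp
    have "a^(N-k)/(a^(N-k) * a^k - 1) = - inverse (a^k)/(inverse (a^(N-k) * a^k) - 1)"
      using b0 f1 f2 by (simp add: field_simps)
    thus ?thesis using e by (simp add: power_inverse)
  qed
qed

theorem lemma3p2: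
  fixes p j :: nat and v :: "'a::field_char_0 \<Rightarrow> int" and \<pi> a :: 'a
  assumes "prime p" and "p \<ge> 5"
    and "padic_field p v"
    and "\<pi> \<noteq> 0" and "v \<pi> = 1"
    and "j < p - 1"
    and "a \<in> int_ring v"
    and "\<not> (\<exists>b\<in>int_ring v. a * (a - 1) = \<pi> * b)"
  shows "mirimanoff p v j a =
    (\<lambda>n u. - (teich p v (-1) ^ j) * inverse (teich p v (-1)) * mirimanoff p v j (inverse a) n u)"
proof -
  interpret padic p v by unfold_locales (use assms in auto)
  have a0: "a \<noteq> 0"
  proof
    assume "a = 0"
    then have "a * (a - 1) = \<pi> * 0 \<and> (0::'a) \<in> int_ring v" by (simp add: int_ring_def)
    thus False using assms(8) by blast
  qed
  show ?thesis
  proof (intro ext)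
    fix n u
    define N where "N = p^(n+1)"
    define S where "S = {k::nat. 1 \<le> k \<and> k \<le> p ^ (n + 1) - 1 \<and> \<not> p dvd k \<and> gamma_idx p v n (int k) = u}"
    define g where "g b k = b ^ k / (b ^ (p ^ (n + 1)) - 1) * teich p v (int k) ^ j * inverse (teich p v (int k))" for b k
    have L: "mirimanoff p v j a n u = sum (g a) S" unfolding mirimanoff_def S_def g_def ..
    have R: "mirimanoff p v j (inverse a) n u = sum (g (inverse a)) S" unfolding mirimanoff_def S_def g_def ..
    have memS: "N - k \<in> S" if "k \<in> S" for k
    proof -
      have k: "1 \<le> k" "k \<le> N - 1" "\<not> p dvd k" "gamma_idx p v n (int k) = u"
        using that by (auto simp: S_def N_def)
      have pN: "p dvd N" by (simp add: N_def)
      have "\<not> p dvd N - k"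
      proof
        assume "p dvd N - k"
        then have "p dvd N - (N - k)" using pN by (simp add: dvd_diff_nat)
        thus False using k(2) k(3) by simp
      qed
      moreover have "gamma_idx p v n (int (N - k)) = u"
        using gamma_neg[OF k(3), of n] k(2) k(4) by (simp add: N_def)
      ultimately show ?thesis using k unfolding S_def N_def[symmetric] by auto
    qed
    have kle: "k \<le> N" if "k \<in> S" for k using that by (auto simp: S_def N_def)
    have "sum (g a) S = sum (\<lambda>k. g a (N - k)) S"
    proof (rule sum.reindex_bij_witness[where i="\<lambda>k. N - k" and j="\<lambda>k. N - k"])
      fix k assume "k \<in> S"
      then have "k \<le> N" by (auto simp: S_def N_def)
      thus "N - (N - k) = k" by simp
      thus "g a (N - (N - k)) = g a k" by simp
    qed (auto intro: memS dest: kle)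
    also have "\<dots> = sum (\<lambda>k. (-1)^j * g (inverse a) k) S"
    proof (rule sum.cong[OF refl])
      fix k assume "k \<in> S"
      then have k: "k \<le> N" "\<not> p dvd k" by (auto simp: S_def N_def)
      have t: "teich p v (int (N - k)) = - teich p v (int k)"
        using teich_neg[OF k(2), of n] k(1) by (simp add: N_def)
      show "g a (N - k) = (-1)^j * g (inverse a) k"
        unfolding g_def N_def[symmetric] t frac_id[OF a0 k(1)]
        by (rule sign_aux)
    qed
    finally show "mirimanoff p v j a n u = - (teich p v (-1) ^ j) * inverse (teich p v (-1)) * mirimanoff p v j (inverse a) n u"
      unfolding L R teich_m1 by (simp add: sum_distrib_left)
  qed
qed

end
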